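(* Let $\lambda$ be a partition of $n$, and let $\mathcal{G}_{rf}(\lambda)$ be the set of polynomials obtained by reading the regular filling of $\lambda$, i.e. $\mathcal{G}_{rf}(\lambda)$ is the union, over all columns $c=0,1,\dots,\lambda_1-1$ of the Young diagram of $\lambda$ and over all entries $r$ appearing in column $c$ of the regular filling, of the sets $e_r(n-c)$ (note $n-c$ is the entry of the bottom cell of column $c$). Then the De Concini–Procesi ideal satisfies $\mathcal{I}_\lambda=(\mathcal{G}_{rf}(\lambda))$.
   Context: $k$ is a field of characteristic $0$ and $R=k[x_1,\dots,x_n]$. For a set $S$ of variables, $e_r(S)$ is the $r$-th elementary symmetric polynomial in the variables of $S$ ($e_0=1$, and $e_r(S)=0$ if $r>|S|$). For $1\le m\le n$, $e_r(m)$ denotes the set $\{e_r(S): S\subseteq\{x_1,\dots,x_n\},\ |S|=m\}$. A partition $\lambda=(\lambda_1\ge\lambda_2\ge\cdots)$ of $n$ has conjugate $\lambda'$ with $\lambda'_i=\#\{j:\lambda_j\ge i\}$ (so $\lambda'_i=0$ for $i>\lambda_1$). The Young diagram of $\lambda$ is drawn with rows counted from the bottom: the bottom row has $\lambda_1$ cells, the next $\lambda_2$, etc., left-justified; columns are numbered $0,1,\dots,\lambda_1-1$ from left to right, and column $c$ has height $\lambda'_{c+1}$. For $1\le m\le n$ put $\delta_m(\lambda)=\lambda'_n+\lambda'_{n-1}+\cdots+\lambda'_{n-m+1}$. The De Concini–Procesi ideal $\mathcal{I}_\lambda\subseteq R$ is the ideal generated by all elements of the sets $e_r(m)$ with $1\le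 m\le n$ and $m\ge r>m-\delta_m(\lambda)$ (Tanisaki's generating set). The regular filling of $\lambda$ places the numbers $1,\dots,n$ in the cells as follows: for each column $c$, the bottom cell of column $c$ receives $n-c$, and the remaining $\lambda'_{c+1}-1$ cells of column $c$ receive, from top to bottom, the consecutive integers $1+\sum_{d<c}(\lambda'_{d+1}-1),\dots,\sum_{d\le c}(\lambda'_{d+1}-1)$ (i.e. the non-bottom cells are filled with $1,2,\dots$ column by column from left to right, top to bottom within each column, and the bottom row is filled last, from right to left). *)

theory Defs
  imports Main "HOL-Library.Poly_Mapping"
begin

text \<open>The variable x_i (i = 1..n) is index i.\<close>

type_synonym 'k mpoly = "(nat \<Rightarrow>\<^sub>0 nat) \<Rightarrow>\<^sub>0 'k"

definition var :: "nat \<Rightarrow> 'k::comm_ring_1 mpoly" where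
  "var i = Poly_Mapping.single (Poly_Mapping.single i 1) 1"

definition polyR :: "nat \<Rightarrow> 'k::comm_ring_1 mpoly set" where
  "polyR n = {p. \<forall>m \<in> Poly_Mapping.keys p. Poly_Mapping.keys m \<subseteq> {1..n}}"

definition ideal_gen :: "nat \<Rightarrow> 'k::comm_ring_1 mpoly set \<Rightarrow> 'k mpoly set" where
  "ideal_gen n G = {(\<Sum>g\<in>F. c g * g) | c F. finite F \<and> F \<subseteq> G \<and> (\<forall>g\<in>F. c g \<in> polyR n)}"

definition esym :: "nat \<Rightarrow> nat set \<Rightarrow> 'k::comm_ring_1 mpoly" where
  "esym r S = (\<Sum>T \<in> {T. T \<subseteq> S \<and> card T = r}. \<Prod>i\<in>T. var i)"

definition esyms :: "nat \<Rightarrow> nat \<Rightarrow> nat \<Rightarrow> 'k::comm_ring_1 mpoly set" where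
  "esyms n r m = {esym r S | S. S \<subseteq> {1..n} \<and> card S = m}"

text \<open>Partitions of n as lists lam = [lam_1, lam_2, ...] (lam_1 = lam ! 0).\<close>
definition is_partition :: "nat \<Rightarrow> nat list \<Rightarrow> bool" where
  "is_partition n lam \<longleftrightarrow> sorted_wrt (\<ge>) lam \<and> (\<forall>x \<in> set lam. 0 < x) \<and> sum_list lam = n"

text \<open>Conjugate partition, 1-indexed: conj lam i = #{j : lam_j \<ge> i}.\<close>
definition conj :: "nat list \<Rightarrow> nat \<Rightarrow> nat" where
  "conj lam i = card {j. j < length lam \<and> lam ! j \<ge> i}"

text \<open>lam_1 (number of columns of the Young diagram); 0 for the empty partition.\<close>
definition ncols :: "nat list \<Rightarrow> nat" where
  "ncols lam = (if lam = [] then 0 else lam ! 0)"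

definition delta :: "nat \<Rightarrow> nat list \<Rightarrow> nat \<Rightarrow> nat" where
  "delta n lam m = (\<Sum>i \<in> {n - m + 1..n}. conj lam i)"

text \<open>Tanisaki's generating set of the De Concini--Procesi ideal.\<close>
definition tanisaki_gens :: "nat \<Rightarrow> nat list \<Rightarrow> 'k::comm_ring_1 mpoly set" where
  "tanisaki_gens n lam =
     (\<Union>m \<in> {1..n}. \<Union>r \<in> {r. r \<le> m \<and> int r > int m - int (delta n lam m)}. esyms n r m)"

definition DP_ideal :: "nat \<Rightarrow> nat list \<Rightarrow> 'k::comm_ring_1 mpoly set" where
  "DP_ideal n lam = ideal_gen n (tanisaki_gens n lam)"

text \<open>Entries of column c (0-indexed) in the regular filling: the bottom cell has n - c,
  the other conj lam (c+1) - 1 cells have consecutive integers s+1..s+conj lam (c+1) - 1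
  where s = sum over d < c of (conj lam (d+1) - 1).\<close>
definition rf_column :: "nat \<Rightarrow> nat list \<Rightarrow> nat \<Rightarrow> nat set" where
  "rf_column n lam c =
     (let s = (\<Sum>d<c. conj lam (d+1) - 1) in {n - c} \<union> {s + 1 .. s + (conj lam (c+1) - 1)})"

definition G_rf :: "nat \<Rightarrow> nat list \<Rightarrow> 'k::comm_ring_1 mpoly set" where
  "G_rf n lam = (\<Union>c < ncols lam. \<Union>r \<in> rf_column n lam c. esyms n r (n - c))"

end

theory Submission
  imports Defs
begin

lemma polyR_add:
  fixes p q :: "'k::comm_ring_1 mpoly"
  assumes "p \<in> polyR n" "q \<in> polyR n" shows "p + q \<in> polyR n"
  unfolding polyR_def
proof (rule CollectI, rule ballI)
  fix m :: "nat \<Rightarrow>\<^sub>0 nat" assume m: "m \<in> Poly_Mapping.keys (p + q)"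
  have "m \<in> Poly_Mapping.keys p \<union> Poly_Mapping.keys q"
    using m keys_add[of p q] by (rule subsetD[rotated])
  then show "Poly_Mapping.keys m \<subseteq> {1..n}"
  proof
    assume "m \<in> Poly_Mapping.keys p" then show ?thesis using assms(1) unfolding polyR_def by simp
  next
    assume "m \<in> Poly_Mapping.keys q" then show ?thesis using assms(2) unfolding polyR_def by simp
  qed
qed

lemma polyR_mult:
  fixes p q :: "'k::comm_ring_1 mpoly"
  assumes "p \<in> polyR n" "q \<in> polyR n" shows "p * q \<in> polyR n"
  unfolding polyR_def
proof (rule CollectI, rule ballI)
  fix m :: "nat \<Rightarrow>\<^sub>0 nat" assume m: "m \<in> Poly_Mapping.keys (p * q)"
  have "m \<in> {a + b | a b. a \<in> Poly_Mapping.keys p \<and> b \<in> Poly_Mapping.keys q}"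
    using m keys_mult[of p q] by (rule subsetD[rotated])
  then obtain a b where ab: "m = a + b" "a \<in> Poly_Mapping.keys p" "b \<in> Poly_Mapping.keys q"
    by (auto simp only: mem_Collect_eq)
  have ka: "Poly_Mapping.keys a \<subseteq> {1..n}" using assms(1) ab(2) unfolding polyR_def by simp
  have kb: "Poly_Mapping.keys b \<subseteq> {1..n}" using assms(2) ab(3) unfolding polyR_def by simp
  have "Poly_Mapping.keys m \<subseteq> Poly_Mapping.keys a \<union> Poly_Mapping.keys b"
    unfolding ab(1) by (rule keys_add)
  then show "Poly_Mapping.keys m \<subseteq> {1..n}" using ka kb by (rule subset_trans[OF _ Un_least])
qed

lemma polyR_const: "Poly_Mapping.single 0 a \<in> polyR n"
  unfolding polyR_def by auto

lemma polyR_one: "(1::'k::comm_ring_1 mpoly) \<in> polyR n"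
  unfolding polyR_def by auto

lemma ideal_gen_intro:
  "finite F \<Longrightarrow> F \<subseteq> G \<Longrightarrow> \<forall>g\<in>F. c g \<in> polyR n \<Longrightarrow> (\<Sum>g\<in>F. c g * g) \<in> ideal_gen n G"
  unfolding ideal_gen_def by blast

lemma ideal_gen_0: "0 \<in> ideal_gen n G"
  unfolding ideal_gen_def by (rule CollectI, rule exI[of _ "\<lambda>_. 0"], rule exI[of _ "{}"]) simp

lemma ideal_gen_gen: "g \<in> G \<Longrightarrow> g \<in> ideal_gen n G"
  unfolding ideal_gen_def
  by (rule CollectI, rule exI[of _ "\<lambda>_. 1"], rule exI[of _ "{g}"]) (simp add: polyR_one)

lemma ideal_gen_add:
  fixes x y :: "'k::comm_ring_1 mpoly"
  assumes "x \<in> ideal_gen n G" "y \<in> ideal_gen n G" shows "x + y \<in> ideal_gen n G"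
proof -
  obtain c1 F1 where 1: "x = (\<Sum>g\<in>F1. c1 g * g)" "finite F1" "F1 \<subseteq> G" "\<forall>g\<in>F1. c1 g \<in> polyR n"
    using assms(1) unfolding ideal_gen_def by blast
  obtain c2 F2 where 2: "y = (\<Sum>g\<in>F2. c2 g * g)" "finite F2" "F2 \<subseteq> G" "\<forall>g\<in>F2. c2 g \<in> polyR n"
    using assms(2) unfolding ideal_gen_def by blast
  define c where "c g = (if g \<in> F1 then c1 g else 0) + (if g \<in> F2 then c2 g else 0)" for g
  have fin: "finite (F1 \<union> F2)" using 1 2 by simp
  have "(\<Sum>g\<in>F1 \<union> F2. c g * g) = (\<Sum>g\<in>F1 \<union> F2. (if g \<in> F1 then c1 g * g else 0))
          + (\<Sum>g\<in>F1 \<union> F2. (if g \<in> F2 then c2 g * g else 0))"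
    unfolding sum.distrib[symmetric] by (rule sum.cong) (auto simp: c_def distrib_right)
  also have "\<dots> = x + y"
  proof -
    have a: "(\<Sum>g\<in>F1 \<union> F2. (if g \<in> F1 then c1 g * g else 0)) = (\<Sum>g\<in>F1. c1 g * g)"
      using sum.inter_restrict[OF fin, of "\<lambda>g. c1 g * g" F1] by (simp add: Int_absorb1)
    have b: "(\<Sum>g\<in>F1 \<union> F2. (if g \<in> F2 then c2 g * g else 0)) = (\<Sum>g\<in>F2. c2 g * g)"
      using sum.inter_restrict[OF fin, of "\<lambda>g. c2 g * g" F2] by (simp add: Int_absorb1)
    show ?thesis using a b 1 2 by simp
  qed
  finally have eq: "x + y = (\<Sum>g\<in>F1 \<union> F2. c g * g)" by simp
  have z: "(0::'k mpoly) \<in> polyR n" unfolding polyR_def by simp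
  have cp: "\<forall>g\<in>F1 \<union> F2. c g \<in> polyR n"
  proof
    fix g assume "g \<in> F1 \<union> F2"
    have "(if g \<in> F1 then c1 g else 0) \<in> polyR n" using 1(4) z by simp
    moreover have "(if g \<in> F2 then c2 g else 0) \<in> polyR n" using 2(4) z by simp
    ultimately show "c g \<in> polyR n" unfolding c_def by (rule polyR_add)
  qed
  have sub: "F1 \<union> F2 \<subseteq> G" using 1(3) 2(3) by blast
  show ?thesis unfolding eq by (rule ideal_gen_intro[OF fin sub cp])
qed

lemma ideal_gen_mult:
  assumes "p \<in> polyR n" "x \<in> ideal_gen n G" shows "p * x \<in> ideal_gen n G"
proof -
  obtain c1 F1 where 1: "x = (\<Sum>g\<in>F1. c1 g * g)" "finite F1" "F1 \<subseteq> G" "\<forall>g\<in>F1. c1 g \<in> polyR n"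
    using assms(2) unfolding ideal_gen_def by blast
  have "p * x = (\<Sum>g\<in>F1. (p * c1 g) * g)" using 1 by (simp add: sum_distrib_left mult.assoc)
  moreover have "\<forall>g\<in>F1. p * c1 g \<in> polyR n" using 1 assms by (auto intro: polyR_mult)
  ultimately show ?thesis using 1 ideal_gen_intro[of F1 G "\<lambda>g. p * c1 g" n] by simp
qed

lemma ideal_gen_sum:
  assumes "finite A" "\<And>a. a \<in> A \<Longrightarrow> f a \<in> ideal_gen n G"
  shows "sum f A \<in> ideal_gen n G"
  using assms
proof (induction A rule: finite_induct)
  case empty then show ?case by (simp add: ideal_gen_0)
next
  case (insert a A)
  have "f a \<in> ideal_gen n G" using insert.prems by simp
  moreover have "sum f A \<in> ideal_gen n G" using insert.IH insert.prems by simp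
  ultimately have "f a + sum f A \<in> ideal_gen n G" by (rule ideal_gen_add)
  then show ?case using insert.hyps by simp
qed

lemma ideal_gen_subset:
  assumes "G \<subseteq> ideal_gen n H" shows "ideal_gen n G \<subseteq> ideal_gen n H"
proof
  fix x assume "x \<in> ideal_gen n G"
  then obtain c F where 1: "x = (\<Sum>g\<in>F. c g * g)" "finite F" "F \<subseteq> G" "\<forall>g\<in>F. c g \<in> polyR n"
    unfolding ideal_gen_def by blast
  show "x \<in> ideal_gen n H" unfolding 1(1)
  proof (rule ideal_gen_sum[OF 1(2)])
    fix g assume g: "g \<in> F"
    then have gi: "g \<in> ideal_gen n H" using 1(3) assms by blast
    have "c g \<in> polyR n" using 1(4) g by blast
    then show "c g * g \<in> ideal_gen n H" using gi by (rule ideal_gen_mult)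
  qed
qed

lemma ideal_gen_mono: assumes "G \<subseteq> H" shows "ideal_gen n G \<subseteq> ideal_gen n H"
proof (rule ideal_gen_subset)
  show "G \<subseteq> ideal_gen n H" using assms ideal_gen_gen by blast
qed

lemma esym_identity:
  assumes fin: "finite S"
  shows "(of_nat (card S - r) :: 'k::comm_ring_1 mpoly) * esym r S = (\<Sum>y\<in>S. esym r (S - {y}))"
proof -
  define B where "B = {T. T \<subseteq> S \<and> card T = r}"
  define P where "P T = (\<Prod>i\<in>T. var i :: 'k mpoly)" for T
  have finB: "finite B" unfolding B_def using fin by simp
  have "(\<Sum>y\<in>S. esym r (S - {y}) :: 'k mpoly) = (\<Sum>y\<in>S. \<Sum>T\<in>{T. T \<in> B \<and> y \<notin> T}. P T)"
    unfolding esym_def P_def B_def by (rule sum.cong) (auto intro!: sum.cong)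
  also have "\<dots> = (\<Sum>T\<in>B. \<Sum>y\<in>{y. y \<in> S \<and> y \<notin> T}. P T)"
    by (rule sum.swap_restrict[OF fin finB])
  also have "\<dots> = (\<Sum>T\<in>B. of_nat (card S - r) * P T)"
  proof (rule sum.cong)
    fix T assume T: "T \<in> B"
    have "{y. y \<in> S \<and> y \<notin> T} = S - T" by auto
    moreover have "card (S - T) = card S - r"
      using T fin unfolding B_def by (auto simp: card_Diff_subset finite_subset)
    ultimately show "(\<Sum>y\<in>{y. y \<in> S \<and> y \<notin> T}. P T) = of_nat (card S - r) * P T"
      by simp
  qed simp
  also have "\<dots> = of_nat (card S - r) * esym r S"
    unfolding esym_def P_def B_def by (simp add: sum_distrib_left)
  finally show ?thesis by simp
qed

lemma esym_from_smaller:
  fixes S :: "nat set"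
  assumes fin: "finite S" and r: "r < card S"
    and IH: "\<And>y. y \<in> S \<Longrightarrow> (esym r (S - {y}) :: 'k::field_char_0 mpoly) \<in> ideal_gen n G"
  shows "(esym r S :: 'k mpoly) \<in> ideal_gen n G"
proof -
  define k where "k = card S - r"
  have k: "(of_nat k :: 'k) \<noteq> 0" using r unfolding k_def by simp
  have inv: "(Poly_Mapping.single 0 (1 / of_nat k) :: 'k mpoly) * of_nat k = 1"
  proof -
    have kk: "(1 / of_nat k) * of_nat k = (1::'k)" using k by simp
    have "(Poly_Mapping.single 0 (1 / of_nat k) :: 'k mpoly) * of_nat k
        = Poly_Mapping.single 0 (1 / of_nat k) * Poly_Mapping.single 0 (of_nat k)"
      by (simp only: single_of_nat)
    also have "\<dots> = Poly_Mapping.single 0 ((1 / of_nat k) * of_nat k)"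
      by (simp only: mult_single add_0)
    also have "\<dots> = (1::'k mpoly)"
      by (simp only: kk single_one)
    finally show ?thesis .
  qed
  have A: "esym r S = Poly_Mapping.single 0 (1 / of_nat k) * ((of_nat k :: 'k mpoly) * esym r S)"
    by (simp only: mult.assoc[symmetric] inv mult_1_left)
  have B: "(of_nat k :: 'k mpoly) * esym r S = (\<Sum>y\<in>S. esym r (S - {y}))"
    unfolding k_def by (rule esym_identity[OF fin])
  have eq: "(esym r S :: 'k mpoly) = Poly_Mapping.single 0 (1 / of_nat k) * (\<Sum>y\<in>S. esym r (S - {y}))"
    using A unfolding B .
  have "(\<Sum>y\<in>S. esym r (S - {y})) \<in> ideal_gen n G"
    by (rule ideal_gen_sum[OF fin]) (rule IH)
  then have mem: "Poly_Mapping.single 0 (1 / of_nat k) * (\<Sum>y\<in>S. esym r (S - {y})) \<in> ideal_gen n G"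
    by (rule ideal_gen_mult[OF polyR_const])
  show ?thesis by (subst eq) (rule mem)
qed

lemma part_le_ncols:
  assumes "is_partition n lam" "j < length lam" shows "lam ! j \<le> ncols lam"
proof (cases "j = 0")
  case True then show ?thesis using assms(2) by (cases lam) (auto simp: ncols_def)
next
  case False
  then have "lam ! 0 \<ge> lam ! j" using assms sorted_wrt_nth_less[of "(\<ge>)" lam 0 j]
    unfolding is_partition_def by auto
  then show ?thesis using assms(2) by (cases lam) (auto simp: ncols_def)
qed

lemma conj_zero:
  assumes "is_partition n lam" "ncols lam < i" shows "conj lam i = 0"
proof -
  have "{j. j < length lam \<and> lam ! j \<ge> i} = {}"
    using part_le_ncols[OF assms(1)] assms(2) by fastforce
  then show ?thesis unfolding conj_def by simp
qed

lemma conj_pos: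
  assumes "c < ncols lam" shows "conj lam (c+1) \<ge> 1"
proof -
  have ne: "lam \<noteq> []" using assms by (auto simp: ncols_def)
  have "0 \<in> {j. j < length lam \<and> lam ! j \<ge> c+1}" using assms ne by (auto simp: ncols_def)
  moreover have "finite {j. j < length lam \<and> lam ! j \<ge> c+1}" by simp
  ultimately show ?thesis unfolding conj_def by (metis One_nat_def Suc_leI card_gt_0_iff empty_iff)
qed

lemma ncols_le:
  assumes "is_partition n lam" shows "ncols lam \<le> n"
proof (cases "lam = []")
  case False
  then have "lam ! 0 \<in> set lam" by simp
  then have "lam ! 0 \<le> sum_list lam" by (rule member_le_sum_list) auto
  then show ?thesis using assms False by (simp add: ncols_def is_partition_def)
qed (simp add: ncols_def)

lemma delta_n:
  assumes P: "is_partition n lam" shows "delta n lam n = n"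
proof -
  have le: "lam ! j \<le> n" if "j < length lam" for j
    using part_le_ncols[OF P that] ncols_le[OF P] by simp
  have "delta n lam n = (\<Sum>i\<in>{1..n}. card {j. j < length lam \<and> lam ! j \<ge> i})"
    by (simp add: delta_def conj_def)
  also have "\<dots> = (\<Sum>i\<in>{1..n}. \<Sum>j\<in>{j. j \<in> {..<length lam} \<and> lam ! j \<ge> i}. (1::nat))"
    by simp
  also have "\<dots> = (\<Sum>j\<in>{..<length lam}. \<Sum>i\<in>{i. i \<in> {1..n} \<and> lam ! j \<ge> i}. (1::nat))"
    by (rule sum.swap_restrict) auto
  also have "\<dots> = (\<Sum>j\<in>{..<length lam}. lam ! j)"
  proof (rule sum.cong)
    fix j assume j: "j \<in> {..<length lam}"
    have "lam ! j \<le> n" using le j by simp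
    then have "{i. i \<in> {1..n} \<and> lam ! j \<ge> i} = {1..lam ! j}" by auto
    then show "(\<Sum>i\<in>{i. i \<in> {1..n} \<and> lam ! j \<ge> i}. (1::nat)) = lam ! j" by simp
  qed simp
  also have "\<dots> = sum_list lam" by (simp add: sum_list_sum_nth atLeast0LessThan)
  finally show ?thesis using P by (simp add: is_partition_def)
qed

lemma delta_step:
  assumes "1 \<le> m" "m \<le> n"
  shows "delta n lam m = conj lam (n - m + 1) + delta n lam (m - 1)"
proof -
  have e: "n - (m - 1) + 1 = Suc (n - m + 1)" using assms by simp
  have "{n - m + 1..n} = insert (n - m + 1) {Suc (n - m + 1)..n}"
    using assms by (intro Icc_eq_insert_lb_nat) simp
  then show ?thesis unfolding delta_def e by simp
qed

lemma delta_beyond: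
  assumes P: "is_partition n lam" "ncols lam \<le> n - m" shows "delta n lam m = 0"
  unfolding delta_def using conj_zero[OF P(1)] P(2) by (intro sum.neutral) auto

lemma t_eq_s:
  assumes P: "is_partition n lam"
  shows "c \<le> ncols lam \<Longrightarrow> int (n - c) - int (delta n lam (n - c)) = int (\<Sum>d<c. conj lam (d+1) - 1)"
proof (induction c)
  case 0 then show ?case using delta_n[OF P] by simp
next
  case (Suc c)
  have c: "c < ncols lam" using Suc.prems by simp
  have cn: "c < n" using c ncols_le[OF P] by simp
  have h: "conj lam (c+1) \<ge> 1" using conj_pos[OF c] .
  have d: "delta n lam (n - c) = conj lam (c + 1) + delta n lam (n - Suc c)"
    using delta_step[of "n - c" n lam] cn by (simp add: Suc_diff_Suc)
  show ?case using Suc.IH c cn h d by simp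
qed

lemma main_ind:
  assumes P: "is_partition n lam"
  shows "m \<le> n \<Longrightarrow> r \<le> m \<Longrightarrow> int r > int m - int (delta n lam m) \<Longrightarrow>
         (esyms n r m :: 'k::field_char_0 mpoly set) \<subseteq> ideal_gen n (G_rf n lam)"
proof (induction m arbitrary: r)
  case 0
  have "delta n lam 0 = 0" by (simp add: delta_def)
  then show ?case using 0 by simp
next
  case (Suc m)
  define c where "c = n - Suc m"
  have c: "c < ncols lam"
  proof (rule ccontr)
    assume "\<not> c < ncols lam"
    then have "delta n lam (Suc m) = 0" using delta_beyond[OF P, of "Suc m"] unfolding c_def by simp
    then show False using Suc.prems by simp
  qed
  define s where "s = (\<Sum>d<c. conj lam (d+1) - 1)"
  define h where "h = conj lam (c+1)"
  have ts: "int (Suc m) - int (delta n lam (Suc m)) = int s"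
    using t_eq_s[OF P, of c] c Suc.prems(1) unfolding s_def c_def by simp
  have ds: "delta n lam (Suc m) = h + delta n lam m"
    using delta_step[of "Suc m" n lam] Suc.prems(1) unfolding h_def c_def by (simp add: Suc_diff_le)
  have Mc: "Suc m = n - c" using Suc.prems(1) unfolding c_def by simp
  show ?case
  proof (cases "r = Suc m \<or> r \<le> s + (h - 1)")
    case True
    have rf: "rf_column n lam c = {n - c} \<union> {s + 1 .. s + (h - 1)}"
      unfolding rf_column_def Let_def s_def h_def by simp
    have "int r > int s" using ts Suc.prems(3) by linarith
    then have "r = n - c \<or> (s + 1 \<le> r \<and> r \<le> s + (h - 1))" using True Mc by auto
    then have "r \<in> rf_column n lam c" unfolding rf by auto
    then have "esyms n r (n - c) \<subseteq> G_rf n lam"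
      unfolding G_rf_def using c by (intro UN_upper[of c, THEN subset_trans[rotated]] UN_upper) simp_all
    then have "esyms n r (Suc m) \<subseteq> G_rf n lam" by (simp only: Mc)
    then show ?thesis by (rule subset_trans) (rule subsetI, erule ideal_gen_gen)
  next
    case False
    then have rm: "r < Suc m" and rs: "r > s + (h - 1)" using Suc.prems by auto
    have h1: "h \<ge> 1" using conj_pos[OF c] unfolding h_def .
    have IH: "(esyms n r m :: 'k mpoly set) \<subseteq> ideal_gen n (G_rf n lam)"
      using Suc.IH[of r] Suc.prems rm rs ts ds h1 by simp
    show ?thesis
    proof
      fix x :: "'k mpoly" assume "x \<in> esyms n r (Suc m)"
      then obtain S where S: "x = esym r S" "S \<subseteq> {1..n}" "card S = Suc m"
        unfolding esyms_def by (auto simp only: mem_Collect_eq)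
      have finS: "finite S" using S(2) by (rule finite_subset) simp
      have "(esym r S :: 'k mpoly) \<in> ideal_gen n (G_rf n lam)"
      proof (rule esym_from_smaller[OF finS])
        show "r < card S" using S rm by simp
        fix y assume "y \<in> S"
        then have "card (S - {y}) = m" using S(3) finS by simp
        moreover have "S - {y} \<subseteq> {1..n}" using S(2) by (rule subset_trans[rotated]) (rule Diff_subset)
        ultimately have "esym r (S - {y}) \<in> (esyms n r m :: 'k mpoly set)"
          unfolding esyms_def by (intro CollectI exI[of _ "S - {y}"]) simp
        then show "(esym r (S - {y}) :: 'k mpoly) \<in> ideal_gen n (G_rf n lam)" by (rule subsetD[OF IH])
      qed
      then show "x \<in> ideal_gen n (G_rf n lam)" using S by simp
    qed
  qed
qed

lemma G_rf_sub:
  assumes P: "is_partition n lam"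
  shows "(G_rf n lam :: 'k::comm_ring_1 mpoly set) \<subseteq> tanisaki_gens n lam"
proof
  fix x :: "'k mpoly" assume "x \<in> G_rf n lam"
  then obtain c r where c: "c < ncols lam" and r: "r \<in> rf_column n lam c" and x: "x \<in> esyms n r (n - c)"
    unfolding G_rf_def by (elim UN_E) (simp only: lessThan_iff)
  have cn: "c < n" using c ncols_le[OF P] by simp
  define s where "s = (\<Sum>d<c. conj lam (d+1) - 1)"
  define h where "h = conj lam (c+1)"
  have h1: "h \<ge> 1" using conj_pos[OF c] unfolding h_def .
  have ts: "int (n - c) - int (delta n lam (n - c)) = int s"
    using t_eq_s[OF P, of c] c unfolding s_def by simp
  have ts1: "int (n - Suc c) - int (delta n lam (n - Suc c)) = int s + int h - 1"
    using t_eq_s[OF P, of "Suc c"] c h1 unfolding s_def h_def by simp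
  have ds: "delta n lam (n - c) = h + delta n lam (n - Suc c)"
    using delta_step[of "n - c" n lam] cn unfolding h_def by (simp add: Suc_diff_Suc)
  have rf: "rf_column n lam c = {n - c} \<union> {s + 1 .. s + (h - 1)}"
    unfolding rf_column_def Let_def s_def h_def by simp
  have rr: "r \<le> n - c \<and> int r > int (n - c) - int (delta n lam (n - c))"
  proof (cases "r = n - c")
    case True then show ?thesis using ts ds h1 by simp
  next
    case False
    then have "s + 1 \<le> r" "r \<le> s + (h - 1)" using r unfolding rf by auto
    then show ?thesis using ts ts1 ds h1 by linarith
  qed
  show "x \<in> tanisaki_gens n lam"
  proof -
    have m: "n - c \<in> {1..n}" using cn by simp
    have rs: "r \<in> {r. r \<le> n - c \<and> int r > int (n - c) - int (delta n lam (n - c))}" using rr by simp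
    show ?thesis unfolding tanisaki_gens_def by (rule UN_I[OF m], rule UN_I[OF rs], rule x)
  qed
qed

theorem mainTheorem3:
  fixes n :: nat and lam :: "nat list"
  assumes "is_partition n lam"
  shows "(DP_ideal n lam :: 'k::field_char_0 mpoly set) = ideal_gen n (G_rf n lam)"
proof
  show "(DP_ideal n lam :: 'k mpoly set) \<subseteq> ideal_gen n (G_rf n lam)"
    unfolding DP_ideal_def
  proof (rule ideal_gen_subset)
    show "(tanisaki_gens n lam :: 'k mpoly set) \<subseteq> ideal_gen n (G_rf n lam)"
    proof
      fix x :: "'k mpoly" assume "x \<in> tanisaki_gens n lam"
      then obtain m r where mr: "m \<in> {1..n}" "r \<in> {r. r \<le> m \<and> int r > int m - int (delta n lam m)}"
        "x \<in> esyms n r m" unfolding tanisaki_gens_def by (elim UN_E)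
      have "(esyms n r m :: 'k mpoly set) \<subseteq> ideal_gen n (G_rf n lam)"
        using mr(1,2) by (intro main_ind[OF assms]) simp_all
      then show "x \<in> ideal_gen n (G_rf n lam)" using mr(3) by (rule subsetD)
    qed
  qed
  show "ideal_gen n (G_rf n lam) \<subseteq> (DP_ideal n lam :: 'k mpoly set)"
    unfolding DP_ideal_def by (rule ideal_gen_mono[OF G_rf_sub[OF assms]])
qed

end
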